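(* For $n\ge1$, $\operatorname{zir}(P_n)=\operatorname{Z}(P_n)=1$. For $n\ge4$, $\overline{\operatorname{Z}}(P_n)=2$. For $n\ge5$, $\operatorname{ZIR}(P_n)=\lfloor (n-1)/2\rfloor$.
   Context: $P_n$ is the path on $n$ vertices. Zero forcing: a blue vertex $u$ changes a white vertex $w$ to blue if $w$ is the only white neighbor of $u$; $B$ is a zero forcing set if from blue set $B$ eventually all vertices are blue; $\operatorname{Z}(G)$ is the minimum size of a zero forcing set and $\overline{\operatorname{Z}}(G)$ the maximum size of an inclusion-minimal zero forcing set. A nonempty $F\subseteq V(G)$ is a fort if every $v\notin F$ has $|N(v)\cap F|\ne1$. A private fort of $x\in S$ relative to $S$ is a fort $F$ with $S\cap F=\{x\}$; $S$ is a ZIr-set if every element of $S$ has a private fort. $\operatorname{zir}(G)$ / $\operatorname{ZIR}(G)$ are the minimum / maximum cardinality of an inclusion-maximal ZIr-set. *)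

theory Defs
  imports Main
begin

text \<open>A simple graph is given by a vertex set V and an adjacency relation adj
  (assumed symmetric and irreflexive where relevant; for paths this holds).\<close>

definition nbhd :: "'a set \<Rightarrow> ('a \<Rightarrow> 'a \<Rightarrow> bool) \<Rightarrow> 'a \<Rightarrow> 'a set" where
  "nbhd V adj v = {u \<in> V. adj v u}"

inductive zf_blue :: "'a set \<Rightarrow> ('a \<Rightarrow> 'a \<Rightarrow> bool) \<Rightarrow> 'a set \<Rightarrow> 'a \<Rightarrow> bool"
  for V adj B where
  init: "b \<in> B \<Longrightarrow> b \<in> V \<Longrightarrow> zf_blue V adj B b"
| force: "zf_blue V adj B u \<Longrightarrow> w \<in> nbhd V adj u \<Longrightarrow>
          (\<forall>x\<in>nbhd V adj u. x \<noteq> w \<longrightarrow> zf_blue V adj B x) \<Longrightarrow> zf_blue V adj B w"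

definition zero_forcing_set :: "'a set \<Rightarrow> ('a \<Rightarrow> 'a \<Rightarrow> bool) \<Rightarrow> 'a set \<Rightarrow> bool" where
  "zero_forcing_set V adj B \<longleftrightarrow> B \<subseteq> V \<and> (\<forall>v\<in>V. zf_blue V adj B v)"

definition minimal_zero_forcing_set :: "'a set \<Rightarrow> ('a \<Rightarrow> 'a \<Rightarrow> bool) \<Rightarrow> 'a set \<Rightarrow> bool" where
  "minimal_zero_forcing_set V adj B \<longleftrightarrow>
     zero_forcing_set V adj B \<and> (\<forall>B'. B' \<subset> B \<longrightarrow> \<not> zero_forcing_set V adj B')"

definition Z :: "'a set \<Rightarrow> ('a \<Rightarrow> 'a \<Rightarrow> bool) \<Rightarrow> nat" where
  "Z V adj = Min (card ` {B. zero_forcing_set V adj B})"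

definition Zbar :: "'a set \<Rightarrow> ('a \<Rightarrow> 'a \<Rightarrow> bool) \<Rightarrow> nat" where
  "Zbar V adj = Max (card ` {B. minimal_zero_forcing_set V adj B})"

definition fort :: "'a set \<Rightarrow> ('a \<Rightarrow> 'a \<Rightarrow> bool) \<Rightarrow> 'a set \<Rightarrow> bool" where
  "fort V adj F \<longleftrightarrow> F \<noteq> {} \<and> F \<subseteq> V \<and>
     (\<forall>v\<in>V - F. card (nbhd V adj v \<inter> F) \<noteq> 1)"

definition private_fort :: "'a set \<Rightarrow> ('a \<Rightarrow> 'a \<Rightarrow> bool) \<Rightarrow> 'a set \<Rightarrow> 'a \<Rightarrow> 'a set \<Rightarrow> bool" where
  "private_fort V adj S x F \<longleftrightarrow> fort V adj F \<and> S \<inter> F = {x}"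

definition ZIr_set :: "'a set \<Rightarrow> ('a \<Rightarrow> 'a \<Rightarrow> bool) \<Rightarrow> 'a set \<Rightarrow> bool" where
  "ZIr_set V adj S \<longleftrightarrow> S \<subseteq> V \<and> (\<forall>x\<in>S. \<exists>F. private_fort V adj S x F)"

definition maximal_ZIr_set :: "'a set \<Rightarrow> ('a \<Rightarrow> 'a \<Rightarrow> bool) \<Rightarrow> 'a set \<Rightarrow> bool" where
  "maximal_ZIr_set V adj S \<longleftrightarrow>
     ZIr_set V adj S \<and> (\<forall>S'. S \<subset> S' \<longrightarrow> \<not> ZIr_set V adj S')"

definition zir :: "'a set \<Rightarrow> ('a \<Rightarrow> 'a \<Rightarrow> bool) \<Rightarrow> nat" where
  "zir V adj = Min (card ` {S. maximal_ZIr_set V adj S})"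

definition ZIR :: "'a set \<Rightarrow> ('a \<Rightarrow> 'a \<Rightarrow> bool) \<Rightarrow> nat" where
  "ZIR V adj = Max (card ` {S. maximal_ZIr_set V adj S})"

definition path_V :: "nat \<Rightarrow> nat set" where
  "path_V n = {0..<n}"

definition path_adj :: "nat \<Rightarrow> nat \<Rightarrow> bool" where
  "path_adj i j \<longleftrightarrow> i + 1 = j \<or> j + 1 = i"

end

theory Submission
  imports Defs
begin

lemma nb: "nbhd (path_V n) path_adj u = {v. v < n \<and> (u + 1 = v \<or> v + 1 = u)}"
  by (auto simp: nbhd_def path_V_def path_adj_def)

lemma nonforce:
  assumes h: "\<forall>b\<in>B. 0<b \<and> b+1<n \<and> b+1\<notin>B \<and> b-1\<notin>B"
  shows "zf_blue (path_V n) path_adj B v \<Longrightarrow> v \<in> B"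
proof (induction rule: zf_blue.induct)
  case (init b) then show ?case by simp
next
  case (force u w)
  have u: "0<u" "u+1<n" "u+1\<notin>B" "u-1\<notin>B" using h force by auto
  have a: "u+1 \<in> nbhd (path_V n) path_adj u" "u-1 \<in> nbhd (path_V n) path_adj u"
    using u by (auto simp: nb)
  show ?case
  proof (cases "w = u+1")
    case True
    then have "u-1 \<noteq> w" by simp
    then show ?thesis using force a u by blast
  next
    case False
    then have "u+1 \<noteq> w" by simp
    then show ?thesis using force a u by blast
  qed
qed

lemma up1:
  assumes "zf_blue (path_V n) path_adj B k" "k = 0 \<or> zf_blue (path_V n) path_adj B (k-1)" "k+1<n"
  shows "zf_blue (path_V n) path_adj B (k+1)"
  apply (rule zf_blue.force[of _ _ _ k])
  using assms by (auto simp: nb)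

lemma down1:
  assumes "zf_blue (path_V n) path_adj B k" "n \<le> k+1 \<or> zf_blue (path_V n) path_adj B (k+1)" "0<k" "k<n"
  shows "zf_blue (path_V n) path_adj B (k-1)"
  apply (rule zf_blue.force[of _ _ _ k])
  using assms by (auto simp: nb)

lemma upall:
  assumes "zf_blue (path_V n) path_adj B a" "a = 0 \<or> zf_blue (path_V n) path_adj B (a-1)"
  shows "a \<le> k \<Longrightarrow> k < n \<Longrightarrow> zf_blue (path_V n) path_adj B k \<and> (k = 0 \<or> zf_blue (path_V n) path_adj B (k-1))"
proof (induction k)
  case 0 then show ?case using assms by auto
next
  case (Suc k)
  show ?case
  proof (cases "a = Suc k")
    case True then show ?thesis using assms by auto
  next
    case False
    then have "a \<le> k" using Suc by auto
    then have "zf_blue (path_V n) path_adj B k \<and> (k = 0 \<or> zf_blue (path_V n) path_adj B (k-1))"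
      using Suc by auto
    then show ?thesis using up1[of n B k] Suc by auto
  qed
qed

lemma downall:
  assumes "zf_blue (path_V n) path_adj B a" "n \<le> a+1 \<or> zf_blue (path_V n) path_adj B (a+1)" "a < n"
  shows "d \<le> a \<Longrightarrow> zf_blue (path_V n) path_adj B (a-d) \<and> (n \<le> a-d+1 \<or> zf_blue (path_V n) path_adj B (a-d+1))"
proof (induction d)
  case 0 then show ?case using assms by auto
next
  case (Suc d)
  then have IH: "zf_blue (path_V n) path_adj B (a-d) \<and> (n \<le> a-d+1 \<or> zf_blue (path_V n) path_adj B (a-d+1))"
    by auto
  have "zf_blue (path_V n) path_adj B (a-d-1)"
    using down1[of n B "a-d"] IH Suc.prems assms(3) by auto
  moreover have "a - Suc d + 1 = a - d" "a - d - 1 = a - Suc d" using Suc.prems by auto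
  ultimately show ?case using IH by auto
qed

lemma zf_pair:
  assumes "b+1 < n"
  shows "zero_forcing_set (path_V n) path_adj {b, b+1}"
  unfolding zero_forcing_set_def
proof (intro conjI ballI)
  show "{b, b+1} \<subseteq> path_V n" using assms by (auto simp: path_V_def)
  fix v assume v: "v \<in> path_V n"
  have bb: "zf_blue (path_V n) path_adj {b, b+1} b" "zf_blue (path_V n) path_adj {b, b+1} (b+1)"
    using assms by (auto intro: zf_blue.init simp: path_V_def)
  show "zf_blue (path_V n) path_adj {b, b + 1} v"
  proof (cases "b+1 \<le> v")
    case True then show ?thesis using upall[of n "{b,b+1}" "b+1" v] bb v by (auto simp: path_V_def)
  next
    case False
    then have "v = b - (b - v)" by auto
    then show ?thesis using downall[of n "{b,b+1}" b "b - v"] bb assms by auto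
  qed
qed

lemma zf_0:
  assumes "1 \<le> n"
  shows "zero_forcing_set (path_V n) path_adj {0}"
  unfolding zero_forcing_set_def
proof (intro conjI ballI)
  show "{0} \<subseteq> path_V n" using assms by (auto simp: path_V_def)
  fix v assume v: "v \<in> path_V n"
  have "zf_blue (path_V n) path_adj {0} 0" using assms by (auto intro: zf_blue.init simp: path_V_def)
  then show "zf_blue (path_V n) path_adj {0} v" using upall[of n "{0}" 0 v] v by (auto simp: path_V_def)
qed

lemma zf_last:
  assumes "1 \<le> n"
  shows "zero_forcing_set (path_V n) path_adj {n-1}"
  unfolding zero_forcing_set_def
proof (intro conjI ballI)
  show "{n-1} \<subseteq> path_V n" using assms by (auto simp: path_V_def)
  fix v assume v: "v \<in> path_V n"
  have b: "zf_blue (path_V n) path_adj {n-1} (n-1)" using assms by (auto intro: zf_blue.init simp: path_V_def)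
  have "v = (n-1) - ((n-1) - v)" using v by (auto simp: path_V_def)
  then show "zf_blue (path_V n) path_adj {n-1} v" using downall[of n "{n-1}" "n-1" "(n-1) - v"] b assms by auto
qed


lemma fort_first:
  assumes "fort (path_V n) path_adj F"
  shows "0 \<in> F"
proof (rule ccontr)
  assume n0: "0 \<notin> F"
  have fin: "finite F" "F \<noteq> {}" "F \<subseteq> path_V n" using assms finite_subset
    by (auto simp: fort_def path_V_def)
  define f where "f = Min F"
  have f: "f \<in> F" "\<And>y. y \<in> F \<Longrightarrow> f \<le> y" using fin by (auto simp: f_def)
  then have "f > 0" using n0 by (cases f) auto
  have "f - 1 \<in> path_V n - F" using f fin \<open>f>0\<close> by (force simp: path_V_def)
  moreover have "nbhd (path_V n) path_adj (f-1) \<inter> F = {f}"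
  proof (rule set_eqI)
    fix x
    show "x \<in> nbhd (path_V n) path_adj (f-1) \<inter> F \<longleftrightarrow> x \<in> {f}"
    proof
      assume "x \<in> nbhd (path_V n) path_adj (f-1) \<inter> F"
      then have xF: "x \<in> F" and d: "f-1+1 = x \<or> x+1 = f-1" by (auto simp: nb)
      have "f \<le> x" using f(2) xF by blast
      then show "x \<in> {f}" using d \<open>f>0\<close> by auto
    next
      assume "x \<in> {f}"
      then show "x \<in> nbhd (path_V n) path_adj (f-1) \<inter> F" unfolding nb using f fin \<open>f>0\<close> by (auto simp: path_V_def)
    qed
  qed
  ultimately show False using assms unfolding fort_def
    by (metis One_nat_def is_singletonI is_singleton_altdef)
qed

lemma fort_last:
  assumes "fort (path_V n) path_adj F"
  shows "n - 1 \<in> F"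
proof (rule ccontr)
  assume n0: "n - 1 \<notin> F"
  have fin: "finite F" "F \<noteq> {}" "F \<subseteq> path_V n" using assms finite_subset
    by (auto simp: fort_def path_V_def)
  define f where "f = Max F"
  have f: "f \<in> F" "\<And>y. y \<in> F \<Longrightarrow> y \<le> f" using fin by (auto simp: f_def)
  have "f < n" using f fin by (auto simp: path_V_def)
  then have "f + 1 < n" using n0 f by (metis Suc_eq_plus1 Suc_lessI diff_Suc_1)
  have "f + 1 \<in> path_V n - F" using f fin \<open>f+1<n\<close> by (force simp: path_V_def)
  moreover have "nbhd (path_V n) path_adj (f+1) \<inter> F = {f}"
  proof (rule set_eqI)
    fix x
    show "x \<in> nbhd (path_V n) path_adj (f+1) \<inter> F \<longleftrightarrow> x \<in> {f}"
    proof
      assume "x \<in> nbhd (path_V n) path_adj (f+1) \<inter> F"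
      then have xF: "x \<in> F" and d: "f+1+1 = x \<or> x+1 = f+1" by (auto simp: nb)
      have "x \<le> f" using f(2) xF by blast
      then show "x \<in> {f}" using d \<open>f+1<n\<close> by auto
    next
      assume "x \<in> {f}"
      then show "x \<in> nbhd (path_V n) path_adj (f+1) \<inter> F" unfolding nb using f fin \<open>f+1<n\<close> by (auto simp: path_V_def)
    qed
  qed
  ultimately show False using assms unfolding fort_def
    by (metis One_nat_def is_singletonI is_singleton_altdef)
qed

lemma fort_gap:
  assumes "fort (path_V n) path_adj F"
  shows "v+1 < n \<Longrightarrow> v \<notin> F \<Longrightarrow> v+1 \<notin> F \<Longrightarrow> False"
proof (induction v)
  case 0 then show ?case using fort_first[OF assms] by simp
next
  case (Suc w)
  have "Suc w \<in> path_V n - F" using Suc.prems by (auto simp: path_V_def)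
  then have c: "card (nbhd (path_V n) path_adj (Suc w) \<inter> F) \<noteq> 1" using assms by (auto simp: fort_def)
  have "w \<notin> F"
  proof
    assume "w \<in> F"
    then have "nbhd (path_V n) path_adj (Suc w) \<inter> F = {w}" using Suc.prems by (auto simp: nb)
    then show False using c by simp
  qed
  then show ?case using Suc by auto
qed

lemma card_odd: "card {x::nat. x < m \<and> odd x} = m div 2"
proof (induction m)
  case 0 then show ?case by simp
next
  case (Suc m)
  show ?case
  proof (cases "odd m")
    case True
    then have "{x. x < Suc m \<and> odd x} = insert m {x. x < m \<and> odd x}" by auto
    then show ?thesis using Suc True by (simp add: odd_iff_mod_2_eq_one)
  next
    case False
    then have "{x. x < Suc m \<and> odd x} = {x. x < m \<and> odd x}" using less_Suc_eq by auto
    then show ?thesis using Suc False by simp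
  qed
qed


lemma arA: "1 \<le> (x::nat) \<Longrightarrow> 1 \<le> y \<Longrightarrow> (x - 1) div 2 = (y - 1) div 2 \<Longrightarrow> x = y \<or> x = y + 1 \<or> y = x + 1" by presburger
lemma arB: "1 \<le> (x::nat) \<Longrightarrow> x + 2 \<le> n \<Longrightarrow> (x - 1) div 2 < (n - 1) div 2" by presburger

lemma zir_endpoint:
  assumes "ZIr_set (path_V n) path_adj S" "e \<in> S" "e = 0 \<or> e = n - 1"
  shows "S \<subseteq> {e}"
proof
  fix y assume y: "y \<in> S"
  obtain F where F: "fort (path_V n) path_adj F" "S \<inter> F = {y}"
    using assms(1) y unfolding ZIr_set_def private_fort_def by blast
  have "e \<in> F" using assms(3) fort_first[OF F(1)] fort_last[OF F(1)] by auto
  then have "e \<in> S \<inter> F" using assms(2) by auto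
  then show "y \<in> {e}" using F(2) by auto
qed

lemma zir_consec:
  assumes "ZIr_set (path_V n) path_adj S" "a \<in> S" "a+1 \<in> S" "x \<in> S" "x \<noteq> a" "x \<noteq> a+1"
  shows False
proof -
  obtain F where F: "fort (path_V n) path_adj F" "S \<inter> F = {x}"
    using assms(1,4) unfolding ZIr_set_def private_fort_def by blast
  have "a \<notin> F" "a+1 \<notin> F" using F(2) assms by auto
  moreover have "a+1 < n" using assms(1,3) by (auto simp: ZIr_set_def path_V_def)
  ultimately show False using fort_gap[OF F(1)] by blast
qed

lemma zir_bound:
  assumes n: "5 \<le> n" and S: "ZIr_set (path_V n) path_adj S"
  shows "card S \<le> (n - 1) div 2"
proof (cases "card S \<le> 2")
  case True then show ?thesis using n by linarith
next
  case False
  have SV: "S \<subseteq> {0..<n}" using S by (auto simp: ZIr_set_def path_V_def)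
  have fin: "finite S" using SV finite_subset by blast
  have "0 \<notin> S"
  proof
    assume "0 \<in> S"
    then have "S \<subseteq> {0}" using zir_endpoint[OF S] by blast
    then have "card S \<le> card {0::nat}" by (intro card_mono) auto
    then have "card S \<le> 1" by simp
    then show False using False by simp
  qed
  have "n - 1 \<notin> S"
  proof
    assume "n - 1 \<in> S"
    then have "S \<subseteq> {n-1}" using zir_endpoint[OF S] by blast
    then have "card S \<le> card {n-1}" by (intro card_mono) auto
    then have "card S \<le> 1" by simp
    then show False using False by simp
  qed
  have nc: "\<And>a. a \<in> S \<Longrightarrow> a + 1 \<notin> S"
  proof
    fix a assume a: "a \<in> S" "a+1 \<in> S"
    have "card {a, a+1} < card S" using False by simp
    moreover have "S \<subseteq> {a, a+1} \<Longrightarrow> card S \<le> card {a, a+1}" using card_mono[of "{a, a+1}" S] by simp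
    ultimately have "\<not> S \<subseteq> {a, a+1}" by linarith
    then obtain x where "x \<in> S" "x \<noteq> a" "x \<noteq> a+1" by blast
    then show False using zir_consec[OF S a] by blast
  qed
  have rng: "\<And>x. x \<in> S \<Longrightarrow> 1 \<le> x \<and> x + 2 \<le> n"
  proof -
    fix x assume "x \<in> S"
    then show "1 \<le> x \<and> x + 2 \<le> n" using SV \<open>0 \<notin> S\<close> \<open>n - 1 \<notin> S\<close>
      by (cases "x = 0"; cases "x = n - 1") auto
  qed
  have inj: "inj_on (\<lambda>x. (x - 1) div 2) S"
  proof (rule inj_onI)
    fix x y assume xy: "x \<in> S" "y \<in> S" "(x - 1) div 2 = (y - 1) div 2"
    have "1 \<le> x" "1 \<le> y" using rng xy by auto
    then have "x = y \<or> x = y + 1 \<or> y = x + 1" using xy(3) arA by blast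
    then show "x = y" using nc xy by blast
  qed
  have img: "(\<lambda>x. (x - 1) div 2) ` S \<subseteq> {..< (n - 1) div 2}"
  proof
    fix z assume "z \<in> (\<lambda>x. (x - 1) div 2) ` S"
    then obtain x where "x \<in> S" "z = (x - 1) div 2" by blast
    then have "1 \<le> x" "x + 2 \<le> n" "z = (x - 1) div 2" using rng by auto
    then show "z \<in> {..< (n - 1) div 2}" using arB by simp
  qed
  have "card S = card ((\<lambda>x. (x - 1) div 2) ` S)" using card_image[OF inj] by simp
  also have "\<dots> \<le> card {..< (n - 1) div 2}" using card_mono[OF _ img] by simp
  finally show ?thesis by simp
qed

definition S0 :: "nat \<Rightarrow> nat set" where "S0 n = {x. x < n - 1 \<and> odd x}"

lemma S0_zir:
  assumes n: "5 \<le> n"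
  shows "ZIr_set (path_V n) path_adj (S0 n)"
  unfolding ZIr_set_def
proof (intro conjI ballI)
  show "S0 n \<subseteq> path_V n" by (auto simp: S0_def path_V_def)
  fix x assume x: "x \<in> S0 n"
  define F where "F = {v. v < n \<and> (v \<notin> S0 n \<or> v = x)}"
  have "fort (path_V n) path_adj F"
    unfolding fort_def
  proof (intro conjI ballI)
    have "0 \<in> F" using n by (simp add: F_def S0_def)
    then show "F \<noteq> {}" by blast
    show "F \<subseteq> path_V n" by (auto simp: F_def path_V_def)
    fix v assume v: "v \<in> path_V n - F"
    then have v2: "v \<in> S0 n" "v \<noteq> x" "v < n" by (auto simp: F_def path_V_def)
    then have v3: "odd v" "v + 1 < n" by (auto simp: S0_def)
    then have "0 < v" by (cases v) auto
    have "nbhd (path_V n) path_adj v \<inter> F = {v - 1, v + 1}"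
    proof (rule set_eqI)
      fix y
      show "y \<in> nbhd (path_V n) path_adj v \<inter> F \<longleftrightarrow> y \<in> {v - 1, v + 1}"
      proof
        assume "y \<in> nbhd (path_V n) path_adj v \<inter> F"
        then show "y \<in> {v - 1, v + 1}" by (auto simp: nb)
      next
        assume y: "y \<in> {v - 1, v + 1}"
        then have "even y" "y < n" using v3 \<open>0 < v\<close> by auto
        then have "y \<in> F" by (auto simp: F_def S0_def)
        then show "y \<in> nbhd (path_V n) path_adj v \<inter> F" using y \<open>0<v\<close> \<open>y<n\<close> by (auto simp: nb)
      qed
    qed
    then show "card (nbhd (path_V n) path_adj v \<inter> F) \<noteq> 1" using \<open>0<v\<close> by simp
  qed
  moreover have "S0 n \<inter> F = {x}" using x by (auto simp: F_def S0_def)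
  ultimately show "\<exists>F. private_fort (path_V n) path_adj (S0 n) x F"
    unfolding private_fort_def by blast
qed

lemma S0_card: "card (S0 n) = (n - 1) div 2"
  unfolding S0_def using card_odd by simp


lemma fin_sub: "finite {B. B \<subseteq> path_V n}"
  by (simp add: path_V_def)

lemma zf_nonempty:
  assumes "1 \<le> n" "zero_forcing_set (path_V n) path_adj B"
  shows "B \<noteq> {}"
proof
  assume "B = {}"
  have "zf_blue (path_V n) path_adj B 0" using assms by (auto simp: zero_forcing_set_def path_V_def)
  then have "0 \<in> B" using nonforce[of B n] \<open>B = {}\<close> by blast
  then show False using \<open>B = {}\<close> by simp
qed

lemma Z_path: assumes "1 \<le> n" shows "Z (path_V n) path_adj = 1"
  unfolding Z_def
proof (rule Min_eqI)
  have "{B. zero_forcing_set (path_V n) path_adj B} \<subseteq> {B. B \<subseteq> path_V n}"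
    by (auto simp: zero_forcing_set_def)
  then show "finite (card ` {B. zero_forcing_set (path_V n) path_adj B})"
    using fin_sub finite_subset by blast
  show "1 \<in> card ` {B. zero_forcing_set (path_V n) path_adj B}"
    using zf_0[OF assms] by force
  fix y assume "y \<in> card ` {B. zero_forcing_set (path_V n) path_adj B}"
  then obtain B where B: "zero_forcing_set (path_V n) path_adj B" "y = card B" by blast
  have "finite B" using B(1) by (auto simp: zero_forcing_set_def path_V_def intro: finite_subset)
  then show "1 \<le> y" using zf_nonempty[OF assms B(1)] B(2) by (simp add: Suc_le_eq card_gt_0_iff)
qed

lemma zir0: assumes "1 \<le> n" shows "ZIr_set (path_V n) path_adj {0}"
  unfolding ZIr_set_def
proof (intro conjI ballI)
  show "{0} \<subseteq> path_V n" using assms by (auto simp: path_V_def)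
  fix x assume "x \<in> {0::nat}"
  have "fort (path_V n) path_adj (path_V n)" using assms by (auto simp: fort_def path_V_def)
  moreover have "{0} \<inter> path_V n = {x}" using assms \<open>x \<in> {0}\<close> by (auto simp: path_V_def)
  ultimately show "\<exists>F. private_fort (path_V n) path_adj {0} x F" unfolding private_fort_def by blast
qed

lemma zir_path: assumes "1 \<le> n" shows "zir (path_V n) path_adj = 1"
  unfolding zir_def
proof (rule Min_eqI)
  have "{S. maximal_ZIr_set (path_V n) path_adj S} \<subseteq> {B. B \<subseteq> path_V n}"
    by (auto simp: maximal_ZIr_set_def ZIr_set_def)
  then show "finite (card ` {S. maximal_ZIr_set (path_V n) path_adj S})"
    using fin_sub finite_subset by blast
  have "maximal_ZIr_set (path_V n) path_adj {0}"
    unfolding maximal_ZIr_set_def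
  proof (intro conjI allI impI)
    show "ZIr_set (path_V n) path_adj {0}" using zir0[OF assms] .
    fix S' :: "nat set" assume "{0} \<subset> S'"
    show "\<not> ZIr_set (path_V n) path_adj S'"
    proof
      assume "ZIr_set (path_V n) path_adj S'"
      then have "S' \<subseteq> {0}" using zir_endpoint[of n S' 0] \<open>{0} \<subset> S'\<close> by blast
      then show False using \<open>{0} \<subset> S'\<close> by blast
    qed
  qed
  then show "1 \<in> card ` {S. maximal_ZIr_set (path_V n) path_adj S}" by force
  fix y assume "y \<in> card ` {S. maximal_ZIr_set (path_V n) path_adj S}"
  then obtain S where S: "maximal_ZIr_set (path_V n) path_adj S" "y = card S" by blast
  have "finite S" using S(1) by (auto simp: maximal_ZIr_set_def ZIr_set_def path_V_def intro: finite_subset)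
  moreover have "S \<noteq> {}"
  proof
    assume "S = {}"
    then have "S \<subset> {0}" by blast
    then show False using S(1) zir0[OF assms] by (auto simp: maximal_ZIr_set_def)
  qed
  ultimately show "1 \<le> y" using S(2) by (simp add: Suc_le_eq card_gt_0_iff)
qed

lemma minzf_sub:
  assumes "minimal_zero_forcing_set V adj B" "zero_forcing_set V adj C" "C \<subseteq> B"
  shows "C = B"
  using assms unfolding minimal_zero_forcing_set_def by blast

lemma minzf_card:
  assumes n: "4 \<le> n" and B: "minimal_zero_forcing_set (path_V n) path_adj B"
  shows "card B \<le> 2"
proof -
  have ZB: "zero_forcing_set (path_V n) path_adj B" using B by (simp add: minimal_zero_forcing_set_def)
  have BV: "B \<subseteq> {0..<n}" using ZB by (auto simp: zero_forcing_set_def path_V_def)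
  show ?thesis
  proof (cases "0 \<in> B")
    case True
    then have "{0} = B" using minzf_sub[OF B zf_0] n by auto
    then show ?thesis by auto
  next
    case n0: False
    show ?thesis
    proof (cases "n - 1 \<in> B")
      case True
      then have "{n-1} = B" using minzf_sub[OF B zf_last] n by auto
      then show ?thesis by auto
    next
      case nl: False
      show ?thesis
      proof (cases "\<exists>b. b \<in> B \<and> b + 1 \<in> B")
        case True
        then obtain b where b: "b \<in> B" "b+1 \<in> B" by blast
        then have "b + 1 < n" using BV by auto
        then have "{b, b+1} = B" using minzf_sub[OF B zf_pair] b by auto
        then show ?thesis using card_insert_le[of "{b+1}" b] by (metis card.empty card_insert_if finite.emptyI finite.insertI insert_absorb insert_not_empty le_SucI numeral_2_eq_2 order_refl singleton_insert_inj_eq' One_nat_def)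
      next
        case False
        have h: "\<forall>b\<in>B. 0<b \<and> b+1<n \<and> b+1\<notin>B \<and> b-1\<notin>B"
        proof
          fix b assume b: "b \<in> B"
          have "0 < b" using b n0 by (cases b) auto
          moreover have "b + 1 < n" using b nl BV by (cases "b + 1 = n") auto
          moreover have "b - 1 \<notin> B" using False b \<open>0<b\<close> by (metis Suc_diff_1 Suc_eq_plus1)
          ultimately show "0<b \<and> b+1<n \<and> b+1\<notin>B \<and> b-1\<notin>B" using False b by blast
        qed
        have "zf_blue (path_V n) path_adj B 0" using ZB n by (auto simp: zero_forcing_set_def path_V_def)
        then have "0 \<in> B" using nonforce[OF h] by blast
        then show ?thesis using n0 by simp
      qed
    qed
  qed
qed

lemma Zbar_path: assumes n: "4 \<le> n" shows "Zbar (path_V n) path_adj = 2"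
  unfolding Zbar_def
proof (rule Max_eqI)
  have "{B. minimal_zero_forcing_set (path_V n) path_adj B} \<subseteq> {B. B \<subseteq> path_V n}"
    by (auto simp: minimal_zero_forcing_set_def zero_forcing_set_def)
  then show "finite (card ` {B. minimal_zero_forcing_set (path_V n) path_adj B})"
    using fin_sub finite_subset by blast
  show "\<And>y. y \<in> card ` {B. minimal_zero_forcing_set (path_V n) path_adj B} \<Longrightarrow> y \<le> 2"
    using minzf_card[OF n] by blast
  have "minimal_zero_forcing_set (path_V n) path_adj {1, 2}"
    unfolding minimal_zero_forcing_set_def
  proof (intro conjI allI impI)
    show "zero_forcing_set (path_V n) path_adj {1, 2}" using zf_pair[of 1 n] n by (simp add: numeral_2_eq_2)
    fix B' :: "nat set" assume B': "B' \<subset> {1, 2}"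
    have nb2: "\<not> (1 \<in> B' \<and> 2 \<in> B')" using B' by auto
    have h: "\<forall>b\<in>B'. 0<b \<and> b+1<n \<and> b+1\<notin>B' \<and> b-1\<notin>B'"
    proof
      fix b assume b: "b \<in> B'"
      then have "b = 1 \<or> b = 2" using B' by auto
      then show "0<b \<and> b+1<n \<and> b+1\<notin>B' \<and> b-1\<notin>B'" using nb2 n B' b by (elim disjE) auto
    qed
    show "\<not> zero_forcing_set (path_V n) path_adj B'"
    proof
      assume "zero_forcing_set (path_V n) path_adj B'"
      then have "zf_blue (path_V n) path_adj B' 0" using n by (auto simp: zero_forcing_set_def path_V_def)
      then have "0 \<in> B'" using nonforce[OF h] by blast
      then show False using B' by auto
    qed
  qed
  then show "2 \<in> card ` {B. minimal_zero_forcing_set (path_V n) path_adj B}"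
    by (metis (mono_tags, lifting) card_2_iff image_eqI mem_Collect_eq one_neq_zero numeral_One numeral_eq_iff semiring_norm(85))
qed

lemma ZIR_path: assumes n: "5 \<le> n" shows "ZIR (path_V n) path_adj = (n - 1) div 2"
  unfolding ZIR_def
proof (rule Max_eqI)
  have "{S. maximal_ZIr_set (path_V n) path_adj S} \<subseteq> {B. B \<subseteq> path_V n}"
    by (auto simp: maximal_ZIr_set_def ZIr_set_def)
  then show "finite (card ` {S. maximal_ZIr_set (path_V n) path_adj S})"
    using fin_sub finite_subset by blast
  show "\<And>y. y \<in> card ` {S. maximal_ZIr_set (path_V n) path_adj S} \<Longrightarrow> y \<le> (n - 1) div 2"
    using zir_bound[OF n] by (auto simp: maximal_ZIr_set_def)
  have "maximal_ZIr_set (path_V n) path_adj (S0 n)"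
    unfolding maximal_ZIr_set_def
  proof (intro conjI allI impI)
    show "ZIr_set (path_V n) path_adj (S0 n)" using S0_zir[OF n] .
    fix S' assume S': "S0 n \<subset> S'"
    show "\<not> ZIr_set (path_V n) path_adj S'"
    proof
      assume Z': "ZIr_set (path_V n) path_adj S'"
      then have "finite S'" by (auto simp: ZIr_set_def path_V_def intro: finite_subset)
      then have "card (S0 n) < card S'" using psubset_card_mono S' by blast
      then show False using zir_bound[OF n Z'] S0_card[of n] by simp
    qed
  qed
  then show "(n - 1) div 2 \<in> card ` {S. maximal_ZIr_set (path_V n) path_adj S}"
    using S0_card[of n] by force
qed

theorem proposition3p3:
  shows "(\<forall>n::nat. n \<ge> 1 \<longrightarrow>
            zir (path_V n) path_adj = 1 \<and> Z (path_V n) path_adj = 1)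
       \<and> (\<forall>n::nat. n \<ge> 4 \<longrightarrow> Zbar (path_V n) path_adj = 2)
       \<and> (\<forall>n::nat. n \<ge> 5 \<longrightarrow> ZIR (path_V n) path_adj = (n - 1) div 2)"
  using zir_path Z_path Zbar_path ZIR_path by blast

end
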